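(* Let $n\ge2$ and $\Delta\subset B_n$ a proper ideal. Then for $0\le i\le n-1$, $$h_i(\mathrm{Bier}(B_n,\Delta))=\#\{(A;x) \text{ facet of } \mathrm{Bier}(B_n,\Delta) : |A\cap(x,n]|+|[1,x)\setminus A|=i\}.$$ Equivalently (reversing the order of the ground set), $h_i(\mathrm{Bier}(B_n,\Delta))=\#\{(A;x): |A\cap[1,x)|+|(x,n]\setminus A|=i\}$.
   Context: $B_n$ is the Boolean lattice of subsets of $[1,n]=\{1,\dots,n\}$; $(x,n]=\{x+1,\dots,n\}$, $[1,x)=\{1,\dots,x-1\}$. A proper ideal $\Delta\subset B_n$ is a nonempty family of subsets of $[1,n]$ closed under taking subsets with $[1,n]\notin\Delta$. The Bier sphere $\mathrm{Bier}(B_n,\Delta)$ is the simplicial complex whose faces are the pairs $(B,C)$ with $B\subsetneq C\subseteq[1,n]$, $B\in\Delta$, $C\notin\Delta$, with $(B',C')$ a face of $(B,C)$ iff $B'\subseteq B$ and $C\subseteq C'$; the face $(B,C)$ has $|B|+n-|C|$ vertices (the empty face is $(\emptyset,[1,n])$). Its facets are $(A;x):=(A,A\cup\{x\})$ with $A\in\Delta$, $x\notin A$, $A\cup\{x\}\notin\Delta$, each with $n-1$ vertices. For a simplicial complex $\Gamma$ all of whose facets have $n-1$ vertices, $f_j(\Gamma)$ is the number of faces with $j$ vertices ($f_0=1$) and $h_i(\Gamma):=\sum_{j=0}^{n-1}(-1)^{i+j}\binom{n-1-j}{n-1-i}f_j(\Gamma)$ for $0\le i\le n-1$, $h_i:=0$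 otherwise. *)

theory Defs
  imports Main
begin

definition proper_ideal :: "nat \<Rightarrow> nat set set \<Rightarrow> bool" where
  "proper_ideal n \<Delta> \<longleftrightarrow>
     \<Delta> \<noteq> {} \<and> (\<forall>A\<in>\<Delta>. A \<subseteq> {1..n}) \<and>
     (\<forall>A\<in>\<Delta>. \<forall>B. B \<subseteq> A \<longrightarrow> B \<in> \<Delta>) \<and> {1..n} \<notin> \<Delta>"

definition bier_faces :: "nat \<Rightarrow> nat set set \<Rightarrow> (nat set \<times> nat set) set" where
  "bier_faces n \<Delta> = {(B, C). B \<subset> C \<and> C \<subseteq> {1..n} \<and> B \<in> \<Delta> \<and> C \<notin> \<Delta>}"

definition face_size :: "nat \<Rightarrow> nat set \<times> nat set \<Rightarrow> nat" where
  "face_size n F = card (fst F) + (n - card (snd F))"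

definition bier_f :: "nat \<Rightarrow> nat set set \<Rightarrow> nat \<Rightarrow> nat" where
  "bier_f n \<Delta> j = card {F \<in> bier_faces n \<Delta>. face_size n F = j}"

definition bier_h :: "nat \<Rightarrow> nat set set \<Rightarrow> nat \<Rightarrow> int" where
  "bier_h n \<Delta> i = (if i \<le> n - 1 then
     (\<Sum>j = 0..n - 1. (-1) ^ (i + j) * int ((n - 1 - j) choose (n - 1 - i)) * int (bier_f n \<Delta> j))
   else 0)"

text \<open>Facets (A;x) = (A, A \<union> {x}), represented as the pair (A, x).\<close>
definition bier_facets :: "nat \<Rightarrow> nat set set \<Rightarrow> (nat set \<times> nat) set" where
  "bier_facets n \<Delta> = {(A, x). A \<in> \<Delta> \<and> x \<in> {1..n} \<and> x \<notin> A \<and> insert x A \<notin> \<Delta>}"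

end

theory Submission
  imports Defs
begin


lemma alt_sum:
  "(\<Sum>t=0..s. (-1::int)^(s+t) * int (s choose t)) = (if s = 0 then 1 else 0)"
proof (cases "s = 0")
  case True then show ?thesis by simp
next
  case False
  have "(\<Sum>t=0..s. (-1::int)^(s+t) * int (s choose t)) = (-1)^s * (\<Sum>t\<le>s. (-1)^t * int (s choose t))"
    by (simp add: sum_distrib_left power_add atLeast0AtMost mult.assoc)
  also have "\<dots> = 0" using choose_alternating_sum[of s] False by simp
  finally show ?thesis using False by simp
qed

lemma binom_inv:
  fixes m r i :: nat
  assumes "r \<le> m" "i \<le> m"
  shows "(\<Sum>j=0..m. (-1::int)^(i+j) * int ((m-j) choose (m-i)) *
            int (if r \<le> j then (m-r) choose (j-r) else 0)) = (if i = r then 1 else 0)"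
proof -
  let ?T = "\<lambda>j. (-1::int)^(i+j) * int ((m-j) choose (m-i)) * int (if r \<le> j then (m-r) choose (j-r) else 0)"
  have z: "?T j = 0" if "j \<notin> {r..i}" "j \<le> m" for j
  proof (cases "r \<le> j")
    case True
    then have "i < j" using that by auto
    then have "m - j < m - i" using that assms by linarith
    then show ?thesis by simp
  qed simp
  have "(\<Sum>j=0..m. ?T j) = (\<Sum>j\<in>{r..i}. ?T j)"
    by (rule sum.mono_neutral_right) (use z assms in auto)
  also have "\<dots> = (\<Sum>j\<in>{r..i}. int ((m-r) choose (i-r)) * ((-1::int)^(i+j) * int ((i-r) choose (j-r))))"
  proof (rule sum.cong[OF refl])
    fix j assume j: "j \<in> {r..i}"
    have cm: "((m-r) choose (i-r)) * ((i-r) choose (j-r)) = ((m-r) choose (j-r)) * ((m-r-(j-r)) choose (i-r-(j-r)))"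
      by (rule choose_mult) (use j assms in auto)
    have e1: "m-r-(j-r) = m-j" "i-r-(j-r) = i-j" using j by auto
    have e2: "(m-j) choose (m-i) = (m-j) choose (i-j)"
      using binomial_symmetric[of "i-j" "m-j"] j assms by (simp add: diff_diff_eq2)
    show "?T j = int ((m-r) choose (i-r)) * ((-1::int)^(i+j) * int ((i-r) choose (j-r)))"
      using j cm e1 e2 by (simp add: mult.commute mult.left_commute flip: of_nat_mult)
  qed
  also have "\<dots> = int ((m-r) choose (i-r)) * (\<Sum>j\<in>{r..i}. (-1::int)^(i+j) * int ((i-r) choose (j-r)))"
    by (simp add: sum_distrib_left)
  also have "(\<Sum>j\<in>{r..i}. (-1::int)^(i+j) * int ((i-r) choose (j-r))) = (if r \<le> i then (if i - r = 0 then 1 else 0) else 0)"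
  proof (cases "r \<le> i")
    case True
    have "(\<Sum>j\<in>{r..i}. (-1::int)^(i+j) * int ((i-r) choose (j-r))) = (\<Sum>t=0..i-r. (-1::int)^(i+(t+r)) * int ((i-r) choose t))"
      by (rule sum.reindex_bij_witness[of _ "\<lambda>t. t + r" "\<lambda>j. j - r"]) (use True in auto)
    also have "\<dots> = (\<Sum>t=0..i-r. (-1::int)^((i-r)+t) * int ((i-r) choose t))"
    proof (rule sum.cong[OF refl])
      fix t
      have "i + (t + r) = (i - r + t) + 2*r" using True by simp
      then have "(-1::int)^(i+(t+r)) = (-1::int)^((i-r)+t) * ((-1)^2)^r"
        by (metis power_add power_mult)
      then show "(-1::int)^(i+(t+r)) * int ((i-r) choose t) = (-1::int)^((i-r)+t) * int ((i-r) choose t)"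
        by simp
    qed
    finally show ?thesis using alt_sum[of "i-r"] True by simp
  qed simp
  finally show ?thesis by auto
qed



definition ivl :: "nat \<Rightarrow> nat set \<Rightarrow> nat \<Rightarrow> (nat set \<times> nat set) set" where
  "ivl n A x = {(B,C). A \<inter> {x<..n} \<subseteq> B \<and> B \<subseteq> A \<and> insert x A \<subseteq> C \<and> C \<subseteq> A \<union> {x..n}}"

definition rk :: "nat \<Rightarrow> nat set \<Rightarrow> nat \<Rightarrow> nat" where
  "rk n A x = card (A \<inter> {x<..n}) + card ({1..<x} - A)"

lemma ivl_sub:
  assumes PI: "proper_ideal n \<Delta>" and F: "(A,x) \<in> bier_facets n \<Delta>"
  shows "ivl n A x \<subseteq> bier_faces n \<Delta>"
proof
  fix G assume G: "G \<in> ivl n A x"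
  obtain B C where GBC: "G = (B,C)" by (cases G)
  have A: "A \<in> \<Delta>" "x \<in> {1..n}" "x \<notin> A" "insert x A \<notin> \<Delta>" using F by (auto simp: bier_facets_def)
  have Asub: "A \<subseteq> {1..n}" using PI A(1) by (auto simp: proper_ideal_def)
  have h: "A \<inter> {x<..n} \<subseteq> B" "B \<subseteq> A" "insert x A \<subseteq> C" "C \<subseteq> A \<union> {x..n}"
    using G GBC by (auto simp: ivl_def)
  have "B \<in> \<Delta>" using PI A(1) h(2) by (auto simp: proper_ideal_def)
  moreover have "C \<notin> \<Delta>" using PI A(4) h(3) by (auto simp: proper_ideal_def)
  moreover have "B \<subset> C" using h A by auto
  moreover have "C \<subseteq> {1..n}" using h(4) Asub A(2) by auto
  ultimately show "G \<in> bier_faces n \<Delta>" using GBC by (auto simp: bier_faces_def)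
qed

lemma ivl_uniq_lt:
  assumes PI: "proper_ideal n \<Delta>" and F: "(A,x) \<in> bier_facets n \<Delta>" and F': "(A',x') \<in> bier_facets n \<Delta>"
    and G: "(B,C) \<in> ivl n A x" "(B,C) \<in> ivl n A' x'" and lt: "x < x'"
  shows False
proof -
  have A: "A \<in> \<Delta>" "x \<in> {1..n}" "x \<notin> A" "insert x A \<notin> \<Delta>" using F by (auto simp: bier_facets_def)
  have A': "A' \<in> \<Delta>" "x' \<in> {1..n}" "x' \<notin> A'" "insert x' A' \<notin> \<Delta>" using F' by (auto simp: bier_facets_def)
  have Asub: "A \<subseteq> {1..n}" using PI A(1) by (auto simp: proper_ideal_def)
  have h: "A \<inter> {x<..n} \<subseteq> B" "B \<subseteq> A" "insert x A \<subseteq> C" "C \<subseteq> A \<union> {x..n}"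
    using G by (auto simp: ivl_def)
  have h': "A' \<inter> {x'<..n} \<subseteq> B" "B \<subseteq> A'" "insert x' A' \<subseteq> C" "C \<subseteq> A' \<union> {x'..n}"
    using G by (auto simp: ivl_def)
  have "insert x A \<subseteq> A'"
  proof
    fix y assume y: "y \<in> insert x A"
    show "y \<in> A'"
    proof (cases "y < x'")
      case True then show ?thesis using y h(3) h'(4) by auto
    next
      case False
      then have "y \<in> A" "y \<le> n" "x < y" using y lt Asub by auto
      then show ?thesis using h(1) h'(2) by auto
    qed
  qed
  then have "insert x A \<in> \<Delta>" using PI A'(1) by (auto simp: proper_ideal_def)
  then show False using A(4) by simp
qed

lemma ivl_uniq:
  assumes PI: "proper_ideal n \<Delta>" and F: "(A,x) \<in> bier_facets n \<Delta>" and F': "(A',x') \<in> bier_facets n \<Delta>"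
    and G: "G \<in> ivl n A x" "G \<in> ivl n A' x'"
  shows "A = A' \<and> x = x'"
proof -
  obtain B C where GBC: "G = (B,C)" by (cases G)
  have xx: "x = x'"
    using ivl_uniq_lt[OF PI F F' G[unfolded GBC]] ivl_uniq_lt[OF PI F' F G(2,1)[unfolded GBC]]
    by (cases x x' rule: linorder_cases) auto
  have h: "A \<inter> {x<..n} \<subseteq> B" "B \<subseteq> A" "insert x A \<subseteq> C" "C \<subseteq> A \<union> {x..n}"
    using G GBC by (auto simp: ivl_def)
  have h': "A' \<inter> {x<..n} \<subseteq> B" "B \<subseteq> A'" "insert x A' \<subseteq> C" "C \<subseteq> A' \<union> {x..n}"
    using G GBC xx by (auto simp: ivl_def)
  have Asub: "A \<subseteq> {1..n}" "A' \<subseteq> {1..n}" using PI F F' by (auto simp: proper_ideal_def bier_facets_def)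
  have "x \<notin> A" "x \<notin> A'" using F F' xx by (auto simp: bier_facets_def)
  have "A \<subseteq> A'"
  proof
    fix y assume y: "y \<in> A"
    show "y \<in> A'"
    proof (cases "y < x")
      case True then show ?thesis using y h(3) h'(4) by auto
    next
      case False
      then have "x < y" "y \<le> n" using y \<open>x \<notin> A\<close> Asub by (auto simp: le_less)
      then show ?thesis using y h(1) h'(2) by auto
    qed
  qed
  moreover have "A' \<subseteq> A"
  proof
    fix y assume y: "y \<in> A'"
    show "y \<in> A"
    proof (cases "y < x")
      case True then show ?thesis using y h'(3) h(4) by auto
    next
      case False
      then have "x < y" "y \<le> n" using y \<open>x \<notin> A'\<close> Asub by (auto simp: le_less)
      then show ?thesis using y h'(1) h(2) by auto
    qed
  qed
  ultimately show ?thesis using xx by auto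
qed

lemma face_in_ivl:
  assumes PI: "proper_ideal n \<Delta>" and G: "(B,C) \<in> bier_faces n \<Delta>"
  shows "\<exists>A x. (A,x) \<in> bier_facets n \<Delta> \<and> (B,C) \<in> ivl n A x"
proof -
  have g: "B \<subset> C" "C \<subseteq> {1..n}" "B \<in> \<Delta>" "C \<notin> \<Delta>" using G by (auto simp: bier_faces_def)
  have down: "\<And>X Y. X \<in> \<Delta> \<Longrightarrow> Y \<subseteq> X \<Longrightarrow> Y \<in> \<Delta>" using PI by (auto simp: proper_ideal_def)
  define D where "D = C - B"
  have finD: "finite D" using g(2) finite_subset unfolding D_def by blast
  have neD: "D \<noteq> {}" using g(1) unfolding D_def by auto
  define X where "X = {y\<in>D. B \<union> (C \<inter> {..y}) \<notin> \<Delta>}"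
  have "Max D \<in> X"
  proof -
    have "B \<union> (C \<inter> {..Max D}) = C"
    proof
      show "C \<subseteq> B \<union> (C \<inter> {..Max D})"
      proof
        fix z assume "z \<in> C"
        then show "z \<in> B \<union> (C \<inter> {..Max D})"
          using Max_ge[OF finD, of z] unfolding D_def by auto
      qed
    qed (use g(1) in auto)
    then show ?thesis using Max_in[OF finD neD] g(4) unfolding X_def by auto
  qed
  then have neX: "X \<noteq> {}" and finX: "finite X" using finD unfolding X_def by auto
  define x where "x = Min X"
  have xX: "x \<in> X" using Min_in[OF finX neX] x_def by simp
  have xmin: "\<And>y. y \<in> X \<Longrightarrow> x \<le> y" using Min_le[OF finX] x_def by simp
  define A where "A = B \<union> (C \<inter> {..<x})"
  have xD: "x \<in> C" "x \<notin> B" using xX unfolding X_def D_def by auto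
  have insA: "insert x A = B \<union> (C \<inter> {..x})" unfolding A_def using xD by auto
  have AD: "A \<in> \<Delta>"
  proof (cases "C \<inter> {..<x} \<subseteq> B")
    case True then have "A = B" unfolding A_def by auto
    then show ?thesis using g(3) by simp
  next
    case False
    define D' where "D' = (C \<inter> {..<x}) - B"
    have finD': "finite D'" "D' \<noteq> {}" using False finD unfolding D'_def D_def
      by (auto intro: finite_subset)
    define y where "y = Max D'"
    have yD': "y \<in> D'" using Max_in[OF finD'] y_def by simp
    have ymax: "\<And>z. z \<in> D' \<Longrightarrow> z \<le> y" using Max_ge[OF finD'(1)] y_def by simp
    have eq: "B \<union> (C \<inter> {..y}) = A"
    proof
      show "A \<subseteq> B \<union> (C \<inter> {..y})"
      proof
        fix z assume "z \<in> A"
        then show "z \<in> B \<union> (C \<inter> {..y})" using ymax[of z] unfolding A_def D'_def by auto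
      qed
    qed (use yD' in \<open>auto simp: A_def D'_def\<close>)
    have "y \<in> D" "y < x" using yD' unfolding D'_def D_def by auto
    then have "y \<notin> X" using xmin by force
    then show ?thesis using \<open>y \<in> D\<close> eq unfolding X_def by auto
  qed
  have "insert x A \<notin> \<Delta>" using xX insA unfolding X_def by auto
  moreover have "x \<in> {1..n}" using xD g(2) by auto
  moreover have "x \<notin> A" using xD unfolding A_def by auto
  ultimately have "(A,x) \<in> bier_facets n \<Delta>" using AD by (auto simp: bier_facets_def)
  moreover have "(B,C) \<in> ivl n A x"
    unfolding ivl_def A_def using g(1,2) xD by auto
  ultimately show ?thesis by blast
qed



lemma ivl_count:
  assumes PI: "proper_ideal n \<Delta>" and F: "(A,x) \<in> bier_facets n \<Delta>"
  shows "card {G \<in> ivl n A x. face_size n G = j} =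
         (if rk n A x \<le> j then (n - 1 - rk n A x) choose (j - rk n A x) else 0)"
    and "rk n A x \<le> n - 1"
proof -
  have A: "x \<in> {1..n}" "x \<notin> A" using F by (auto simp: bier_facets_def)
  have Asub: "A \<subseteq> {1..n}" using PI F by (auto simp: proper_ideal_def bier_facets_def)
  define L where "L = {1..<x}"
  define U where "U = {x<..n}"
  define P where "P = A \<inter> L"
  define Q where "Q = U - A"
  define g where "g S = ((A \<inter> U) \<union> (S \<inter> L), insert x A \<union> (Q - S))" for S
  define hh where "hh G = (fst G \<inter> L) \<union> (U - snd G)" for G
  let ?r = "rk n A x"
  have rdef: "?r = card (A \<inter> U) + card (L - A)" unfolding rk_def U_def L_def by simp
  have fins: "finite L" "finite U" "finite P" "finite Q" unfolding L_def U_def P_def Q_def by auto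
  have LU: "L \<inter> U = {}" "x \<notin> L" "x \<notin> U" unfolding L_def U_def by auto
  have PQ: "P \<inter> Q = {}" "P \<subseteq> L" "Q \<subseteq> U" unfolding P_def Q_def using LU by auto
  have cardPQ: "card (P \<union> Q) = n - 1 - ?r" and rle: "?r \<le> n - 1"
  proof -
    have "card P + card (L - A) = card L"
    proof -
      have "L = P \<union> (L - A)" "P \<inter> (L - A) = {}" unfolding P_def by auto
      then show ?thesis using card_Un_disjoint[of P "L - A"] fins by simp
    qed
    moreover have "card Q + card (A \<inter> U) = card U"
    proof -
      have "U = Q \<union> (A \<inter> U)" "Q \<inter> (A \<inter> U) = {}" unfolding Q_def by auto
      then show ?thesis using card_Un_disjoint[of Q "A \<inter> U"] fins by simp
    qed
    moreover have "card L = x - 1" "card U = n - x" unfolding L_def U_def by auto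
    moreover have "card (P \<union> Q) = card P + card Q" using card_Un_disjoint PQ fins by blast
    ultimately show "card (P \<union> Q) = n - 1 - ?r" "?r \<le> n - 1" using rdef A(1) by auto
  qed
  have a: "g S \<in> ivl n A x" if "S \<subseteq> P \<union> Q" for S
    using that A Asub unfolding g_def ivl_def P_def Q_def L_def U_def by auto
  have b: "hh G \<subseteq> P \<union> Q \<and> g (hh G) = G" if "G \<in> ivl n A x" for G
  proof -
    obtain B C where GBC: "G = (B,C)" by (cases G)
    have h: "A \<inter> {x<..n} \<subseteq> B" "B \<subseteq> A" "insert x A \<subseteq> C" "C \<subseteq> A \<union> {x..n}"
      using that GBC by (auto simp: ivl_def)
    have "hh G \<subseteq> P \<union> Q" using h unfolding hh_def GBC P_def Q_def L_def U_def by auto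
    moreover have "fst (g (hh G)) = B"
    proof -
      have "B = (A \<inter> U) \<union> (B \<inter> L)"
      proof
        show "B \<subseteq> (A \<inter> U) \<union> (B \<inter> L)"
        proof
          fix z assume z: "z \<in> B"
          then have "z \<in> A" "z \<noteq> x" "z \<in> {1..n}" using h A Asub by auto
          then show "z \<in> (A \<inter> U) \<union> (B \<inter> L)" using z unfolding U_def L_def by (cases "z < x") auto
        qed
      qed (use h in \<open>auto simp: U_def\<close>)
      then show ?thesis unfolding g_def hh_def GBC using LU by auto
    qed
    moreover have "snd (g (hh G)) = C"
    proof -
      have "C = insert x A \<union> (Q - (B \<inter> L \<union> (U - C)))"
      proof
        show "C \<subseteq> insert x A \<union> (Q - (B \<inter> L \<union> (U - C)))"
        proof
          fix z assume z: "z \<in> C"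
          show "z \<in> insert x A \<union> (Q - (B \<inter> L \<union> (U - C)))"
          proof (cases "z \<in> insert x A")
            case False
            then have "x < z" "z \<le> n" using h(4) z by auto
            then show ?thesis using z False unfolding Q_def U_def L_def by auto
          qed auto
        qed
      qed (use h in \<open>auto simp: Q_def U_def\<close>)
      then show ?thesis unfolding g_def hh_def GBC by simp
    qed
    ultimately show ?thesis by (metis prod.collapse GBC fst_conv snd_conv)
  qed
  have c: "hh (g S) = S" if "S \<subseteq> P \<union> Q" for S
    using that LU unfolding hh_def g_def P_def Q_def by auto
  have d: "face_size n (g S) = ?r + card S" if S: "S \<subseteq> P \<union> Q" for S
  proof -
    have finS: "finite S" using S fins finite_subset by blast
    have c1: "card (fst (g S)) = card (A \<inter> U) + card (S \<inter> L)"
      unfolding g_def fst_conv using LU fins finS by (intro card_Un_disjoint) auto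
    have sub: "snd (g S) \<subseteq> {1..n}" using a[OF S] A Asub by (auto simp: ivl_def)
    have fin2: "finite (snd (g S))" using sub finite_subset by blast
    have "n - card (snd (g S)) = card ({1..n} - snd (g S))"
      using card_Diff_subset[OF fin2 sub] by simp
    also have "{1..n} - snd (g S) = (L - A) \<union> (S \<inter> U)"
    proof
      show "{1..n} - snd (g S) \<subseteq> (L - A) \<union> (S \<inter> U)"
      proof
        fix z assume z: "z \<in> {1..n} - snd (g S)"
        then show "z \<in> (L - A) \<union> (S \<inter> U)" unfolding g_def Q_def L_def U_def
          by (cases "z < x") auto
      qed
    qed (use S A PQ LU in \<open>auto simp: g_def Q_def L_def U_def P_def\<close>)
    also have "card \<dots> = card (L - A) + card (S \<inter> U)"
      using LU fins finS by (intro card_Un_disjoint) auto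
    finally have c2: "n - card (snd (g S)) = card (L - A) + card (S \<inter> U)" .
    have "S = (S \<inter> L) \<union> (S \<inter> U)" using S PQ by auto
    then have c3: "card S = card (S \<inter> L) + card (S \<inter> U)"
      using card_Un_disjoint[of "S \<inter> L" "S \<inter> U"] finS LU by auto
    show ?thesis unfolding face_size_def using c1 c2 c3 rdef by simp
  qed
  have ge: "?r \<le> face_size n G" if "G \<in> ivl n A x" for G
  proof -
    have "hh G \<subseteq> P \<union> Q" "g (hh G) = G" using b[OF that] by auto
    then have "face_size n G = ?r + card (hh G)" using d[of "hh G"] by simp
    then show ?thesis by simp
  qed
  show "rk n A x \<le> n - 1" by (rule rle)
  show "card {G \<in> ivl n A x. face_size n G = j} =
         (if rk n A x \<le> j then (n - 1 - rk n A x) choose (j - rk n A x) else 0)"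
  proof (cases "?r \<le> j")
    case False
    then have "{G \<in> ivl n A x. face_size n G = j} = {}" using ge by force
    then show ?thesis using False by (simp only: card.empty if_False)
  next
    case True
    have "bij_betw g {S. S \<subseteq> P \<union> Q \<and> card S = j - ?r} {G \<in> ivl n A x. face_size n G = j}"
    proof (rule bij_betw_byWitness[where f' = hh])
      show "\<forall>S\<in>{S. S \<subseteq> P \<union> Q \<and> card S = j - ?r}. hh (g S) = S" using c by simp
      show "\<forall>G\<in>{G \<in> ivl n A x. face_size n G = j}. g (hh G) = G" using b by simp
      show "g ` {S. S \<subseteq> P \<union> Q \<and> card S = j - ?r} \<subseteq> {G \<in> ivl n A x. face_size n G = j}"
      proof
        fix G assume "G \<in> g ` {S. S \<subseteq> P \<union> Q \<and> card S = j - ?r}"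
        then obtain S where S: "S \<subseteq> P \<union> Q" "card S = j - ?r" and GS: "G = g S" by blast
        have "face_size n G = j" using d[OF S(1)] S(2) True GS by simp
        then show "G \<in> {G \<in> ivl n A x. face_size n G = j}" using a[OF S(1)] GS by simp
      qed
      show "hh ` {G \<in> ivl n A x. face_size n G = j} \<subseteq> {S. S \<subseteq> P \<union> Q \<and> card S = j - ?r}"
      proof
        fix S assume "S \<in> hh ` {G \<in> ivl n A x. face_size n G = j}"
        then obtain G where G: "G \<in> ivl n A x" "face_size n G = j" and SG: "S = hh G" by blast
        have "S \<subseteq> P \<union> Q" "g S = G" using b[OF G(1)] SG by simp_all
        moreover have "face_size n (g S) = ?r + card S" using d[OF \<open>S \<subseteq> P \<union> Q\<close>] .
        ultimately show "S \<in> {S. S \<subseteq> P \<union> Q \<and> card S = j - ?r}" using G(2) by simp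
      qed
    qed
    then have "card {G \<in> ivl n A x. face_size n G = j} = card {S. S \<subseteq> P \<union> Q \<and> card S = j - ?r}"
      by (rule bij_betw_same_card[symmetric])
    also have "\<dots> = card (P \<union> Q) choose (j - ?r)" using n_subsets[of "P \<union> Q" "j - ?r"] fins by simp
    finally show ?thesis using True cardPQ by simp
  qed
qed



theorem mainTheorem9:
  fixes n :: nat and \<Delta> :: "nat set set" and i :: nat
  assumes "n \<ge> 2" and "proper_ideal n \<Delta>" and "i \<le> n - 1"
  shows "bier_h n \<Delta> i =
    int (card {(A, x) \<in> bier_facets n \<Delta>.
                 card (A \<inter> {x<..n}) + card ({1..<x} - A) = i})"
proof -
  note PI = assms(2)
  let ?Fa = "bier_facets n \<Delta>"
  have finFa: "finite ?Fa"
  proof (rule finite_subset)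
    show "?Fa \<subseteq> Pow {1..n} \<times> {1..n}" using PI by (auto simp: bier_facets_def proper_ideal_def)
  qed auto
  have finFc: "finite (bier_faces n \<Delta>)"
  proof (rule finite_subset)
    show "bier_faces n \<Delta> \<subseteq> Pow {1..n} \<times> Pow {1..n}" by (auto simp: bier_faces_def)
  qed auto
  define c where "c F j = (if rk n (fst F) (snd F) \<le> j
        then (n - 1 - rk n (fst F) (snd F)) choose (j - rk n (fst F) (snd F)) else 0)" for F j
  have fj: "bier_f n \<Delta> j = (\<Sum>F\<in>?Fa. c F j)" for j
  proof -
    have "{G \<in> bier_faces n \<Delta>. face_size n G = j} =
          (\<Union>F\<in>?Fa. {G \<in> ivl n (fst F) (snd F). face_size n G = j})"
    proof
      show "{G \<in> bier_faces n \<Delta>. face_size n G = j} \<subseteq> (\<Union>F\<in>?Fa. {G \<in> ivl n (fst F) (snd F). face_size n G = j})"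
      proof
        fix G assume G: "G \<in> {G \<in> bier_faces n \<Delta>. face_size n G = j}"
        obtain B C where GBC: "G = (B,C)" by (cases G)
        obtain A x where "(A,x) \<in> ?Fa" "(B,C) \<in> ivl n A x"
          using face_in_ivl[OF PI, of B C] G GBC by auto
        then show "G \<in> (\<Union>F\<in>?Fa. {G \<in> ivl n (fst F) (snd F). face_size n G = j})"
          using G GBC by force
      qed
      show "(\<Union>F\<in>?Fa. {G \<in> ivl n (fst F) (snd F). face_size n G = j}) \<subseteq> {G \<in> bier_faces n \<Delta>. face_size n G = j}"
        using ivl_sub[OF PI] by force
    qed
    then have "bier_f n \<Delta> j = card (\<Union>F\<in>?Fa. {G \<in> ivl n (fst F) (snd F). face_size n G = j})"
      unfolding bier_f_def by simp
    also have "\<dots> = (\<Sum>F\<in>?Fa. card {G \<in> ivl n (fst F) (snd F). face_size n G = j})"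
    proof (rule card_UN_disjoint[OF finFa])
      show "\<forall>F\<in>?Fa. finite {G \<in> ivl n (fst F) (snd F). face_size n G = j}"
      proof
        fix F assume "F \<in> ?Fa"
        then have "ivl n (fst F) (snd F) \<subseteq> bier_faces n \<Delta>" using ivl_sub[OF PI, of "fst F" "snd F"] by simp
        then show "finite {G \<in> ivl n (fst F) (snd F). face_size n G = j}"
          using finFc by (auto intro: finite_subset)
      qed
      show "\<forall>F\<in>?Fa. \<forall>F'\<in>?Fa. F \<noteq> F' \<longrightarrow>
          {G \<in> ivl n (fst F) (snd F). face_size n G = j} \<inter> {G \<in> ivl n (fst F') (snd F'). face_size n G = j} = {}"
      proof (intro ballI impI)
        fix F F' assume F: "F \<in> ?Fa" "F' \<in> ?Fa" "F \<noteq> F'"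
        show "{G \<in> ivl n (fst F) (snd F). face_size n G = j} \<inter> {G \<in> ivl n (fst F') (snd F'). face_size n G = j} = {}"
        proof (rule ccontr)
          assume "\<not> ?thesis"
          then obtain G where "G \<in> ivl n (fst F) (snd F)" "G \<in> ivl n (fst F') (snd F')" by blast
          then have "fst F = fst F' \<and> snd F = snd F'"
            using ivl_uniq[OF PI, of "fst F" "snd F" "fst F'" "snd F'" G] F by simp
          then show False using F(3) by (simp add: prod_eq_iff)
        qed
      qed
    qed
    also have "\<dots> = (\<Sum>F\<in>?Fa. c F j)"
    proof (rule sum.cong[OF refl])
      fix F assume "F \<in> ?Fa"
      then show "card {G \<in> ivl n (fst F) (snd F). face_size n G = j} = c F j"
        using ivl_count(1)[OF PI, of "fst F" "snd F" j] unfolding c_def by simp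
    qed
    finally show ?thesis .
  qed
  have "bier_h n \<Delta> i = (\<Sum>j=0..n-1. (-1)^(i+j) * int ((n-1-j) choose (n-1-i)) * int (\<Sum>F\<in>?Fa. c F j))"
    unfolding bier_h_def using assms(3) fj by simp
  also have "\<dots> = (\<Sum>F\<in>?Fa. \<Sum>j=0..n-1. (-1)^(i+j) * int ((n-1-j) choose (n-1-i)) * int (c F j))"
    by (simp add: sum_distrib_left; rule sum.swap)
  also have "\<dots> = (\<Sum>F\<in>?Fa. (if i = rk n (fst F) (snd F) then 1 else 0))"
  proof (rule sum.cong[OF refl])
    fix F assume "F \<in> ?Fa"
    then have "rk n (fst F) (snd F) \<le> n - 1" using ivl_count(2)[OF PI, of "fst F" "snd F"] by simp
    then show "(\<Sum>j=0..n-1. (-1)^(i+j) * int ((n-1-j) choose (n-1-i)) * int (c F j)) = (if i = rk n (fst F) (snd F) then 1 else 0)"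
      unfolding c_def using binom_inv[of "rk n (fst F) (snd F)" "n-1" i] assms(3) by simp
  qed
  also have "\<dots> = int (card {F \<in> ?Fa. i = rk n (fst F) (snd F)})"
  proof -
    have "(\<Sum>F\<in>?Fa. (if i = rk n (fst F) (snd F) then 1 else 0)) = (\<Sum>F\<in>{F \<in> ?Fa. i = rk n (fst F) (snd F)}. (1::int))"
      by (rule sum.inter_filter[OF finFa, symmetric])
    then show ?thesis by simp
  qed
  also have "{F \<in> ?Fa. i = rk n (fst F) (snd F)} = {(A, x) \<in> ?Fa. card (A \<inter> {x<..n}) + card ({1..<x} - A) = i}"
    by (auto simp: rk_def)
  finally show ?thesis .
qed

end
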